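(* Let $L\ge2$ and let $[0,1]^2=S_0\supset S_1\supset\cdots$ be such that each $S_n$ is the union of $L^n$ squares of $\mathcal{D}_n$, one from each column; let $\mathcal{S}_n=\{Q\in\mathcal{D}_n:Q\subset S_n\}$. Define \[ f_{n,\theta}(t)=\#\{Q\in\mathcal{S}_n:\ell(\theta,t)\cap Q\neq\varnothing\},\qquad \Theta_k=\{\theta\in[0,\pi/2]:\tan\theta\in[L^k,L^{k+1}]\}. \] Then there is a constant $C$ depending only on $L$ such that \[ \int_{\Theta_k}\|f_{n,\theta}\|_{L^2(\mathbb{R})}^2\,d\theta\le C\,\frac{n}{L^{2k}}\qquad\text{for all } k=1,\dots,\lfloor\log_Ln\rfloor . \]
   Context: $\mathcal{D}_n$ is the set of closed squares obtained by dividing $[0,1]^2$ into an $L^n\times L^n$ grid. $\operatorname{proj}_\theta(x)=\langle x,(-\sin\theta,\cos\theta)\rangle$ and $\ell(\theta,t)=\operatorname{proj}_\theta^{-1}(t)$, the line with direction $(\cos\theta,\sin\theta)$ through $t(-\sin\theta,\cos\theta)$. *)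

theory Defs
  imports "HOL-Analysis.Analysis"
begin

definition grid_sq :: "nat \<Rightarrow> nat \<Rightarrow> nat \<Rightarrow> nat \<Rightarrow> (real \<times> real) set" where
  "grid_sq L n i j =
     {real i / real L ^ n .. real (i + 1) / real L ^ n} \<times>
     {real j / real L ^ n .. real (j + 1) / real L ^ n}"

definition grid :: "nat \<Rightarrow> nat \<Rightarrow> (real \<times> real) set set" where
  "grid L n = {grid_sq L n i j | i j. i < L ^ n \<and> j < L ^ n}"

definition proj :: "real \<Rightarrow> real \<times> real \<Rightarrow> real" where
  "proj \<theta> x = x \<bullet> (- sin \<theta>, cos \<theta>)"

definition line :: "real \<Rightarrow> real \<Rightarrow> (real \<times> real) set" where
  "line \<theta> t = proj \<theta> -` {t}"

definition admissible :: "nat \<Rightarrow> (nat \<Rightarrow> (real \<times> real) set) \<Rightarrow> bool" where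
  "admissible L S \<longleftrightarrow>
     S 0 = {0..1} \<times> {0..1} \<and>
     (\<forall>n. S (Suc n) \<subseteq> S n) \<and>
     (\<forall>n. \<exists>c. (\<forall>i<L ^ n. c i < L ^ n) \<and> S n = (\<Union>i<L ^ n. grid_sq L n i (c i)))"

definition squares :: "nat \<Rightarrow> (nat \<Rightarrow> (real \<times> real) set) \<Rightarrow> nat \<Rightarrow> (real \<times> real) set set" where
  "squares L S n = {Q \<in> grid L n. Q \<subseteq> S n}"

definition fcount :: "nat \<Rightarrow> (nat \<Rightarrow> (real \<times> real) set) \<Rightarrow> nat \<Rightarrow> real \<Rightarrow> real \<Rightarrow> real" where
  "fcount L S n \<theta> t = real (card {Q \<in> squares L S n. line \<theta> t \<inter> Q \<noteq> {}})"

definition Theta :: "nat \<Rightarrow> nat \<Rightarrow> real set" where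
  "Theta L k = {\<theta> \<in> {0..pi/2}. tan \<theta> \<in> {real L ^ k .. real L ^ (k + 1)}}"

end

theory Submission
  imports Defs
begin

lemma card_mod_le:
  fixes N B :: nat
  assumes "B > 0" "B dvd N" "finite R"
  shows "card {i. i < N \<and> i mod B \<in> R} \<le> (N div B) * card R"
proof -
  have "{i. i < N \<and> i mod B \<in> R} \<subseteq> (\<lambda>(q,u). q*B+u) ` ({..<N div B} \<times> R)"
  proof
    fix i assume "i \<in> {i. i < N \<and> i mod B \<in> R}"
    hence i: "i < N" "i mod B \<in> R" by auto
    have "i div B < N div B" using i assms
      by (simp add: less_mult_imp_div_less)
    moreover have "i = (i div B)*B + i mod B" by simp
    ultimately show "i \<in> (\<lambda>(q,u). q*B+u) ` ({..<N div B} \<times> R)"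
      using i by (auto intro!: image_eqI[where x="(i div B, i mod B)"])
  qed
  hence "card {i. i < N \<and> i mod B \<in> R} \<le> card ((\<lambda>(q,u). q*B+u) ` ({..<N div B} \<times> R))"
    by (intro card_mono) (auto simp: assms)
  also have "\<dots> \<le> card ({..<N div B} \<times> R)" by (rule card_image_le) (auto simp: assms)
  also have "\<dots> = (N div B) * card R" by (simp add: card_cartesian_product)
  finally show ?thesis .
qed

lemma div_sub_same: fixes i B d :: nat assumes "B > 0" "\<not> i mod B < d" shows "(i - d) div B = i div B"
proof -
  have i: "i = i mod B + (i div B) * B" by simp
  have "i - d = (i mod B - d) + (i div B) * B" using assms(2) i by linarith
  hence "(i - d) div B = (i mod B - d) div B + i div B" using assms(1) by simp
  moreover have "i mod B - d < B" using assms(1) by (meson diff_le_self le_less_trans mod_less_divisor)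
  ultimately show ?thesis by simp
qed
lemma div_add_same: fixes i B d :: nat assumes "B > 0" "i mod B + d < B" shows "(i + d) div B = i div B"
proof -
  have e: "i + d = (i mod B + d) + (i div B) * B" by simp
  have "(i + d) div B = ((i mod B + d) + (i div B) * B) div B" by (subst e) (rule refl)
  also have "\<dots> = i div B + (i mod B + d) div B" using assms(1) by (intro div_mult_self1) simp
  also have "\<dots> = i div B" using assms(2) by simp
  finally show ?thesis .
qed
lemma cross_count:
  fixes N B :: nat and m :: int
  assumes "B > 0" "B dvd N"
  shows "card {i. i < N \<and> 0 \<le> int i + m \<and> i div B \<noteq> nat (int i + m) div B} \<le> (N div B) * nat \<bar>m\<bar>"
proof (cases "m \<ge> 0")
  case True
  have "{i. i < N \<and> 0 \<le> int i + m \<and> i div B \<noteq> nat (int i + m) div B} \<subseteq> {i. i < N \<and> i mod B \<in> {B - nat m..<B}}"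
  proof safe
    fix i assume i: "i < N" "i div B \<noteq> nat (int i + m) div B"
    have e: "nat (int i + m) = i + nat m" using True by auto
    show "i mod B \<in> {B - nat m..<B}"
    proof (rule ccontr)
      assume "i mod B \<notin> {B - nat m..<B}"
      hence "i mod B + nat m < B" using assms(1) by auto
      hence "(i + nat m) div B = i div B" by (rule div_add_same[OF assms(1)])
      thus False using i(2) e by simp
    qed
  qed
  hence "card {i. i < N \<and> 0 \<le> int i + m \<and> i div B \<noteq> nat (int i + m) div B} \<le> card {i. i < N \<and> i mod B \<in> {B - nat m..<B}}"
    by (intro card_mono) auto
  also have "\<dots> \<le> (N div B) * card {B - nat m..<B}" by (rule card_mod_le) (use assms in auto)
  also have "\<dots> \<le> (N div B) * nat \<bar>m\<bar>" using True by (intro mult_left_mono) auto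
  finally show ?thesis .
next
  case False
  have "{i. i < N \<and> 0 \<le> int i + m \<and> i div B \<noteq> nat (int i + m) div B} \<subseteq> {i. i < N \<and> i mod B \<in> {..<nat (-m)}}"
  proof safe
    fix i assume i: "i < N" "0 \<le> int i + m" "i div B \<noteq> nat (int i + m) div B"
    have e: "nat (int i + m) = i - nat (-m)" "nat (-m) \<le> i" using False i(2) by auto
    show "i mod B < nat (-m)"
    proof (rule ccontr)
      assume "\<not> i mod B < nat (-m)"
      hence "(i - nat (-m)) div B = i div B" by (rule div_sub_same[OF assms(1)])
      thus False using i(3) e(1) by (simp only:)
    qed
  qed
  hence "card {i. i < N \<and> 0 \<le> int i + m \<and> i div B \<noteq> nat (int i + m) div B} \<le> card {i. i < N \<and> i mod B \<in> {..<nat (-m)}}"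
    by (intro card_mono) auto
  also have "\<dots> \<le> (N div B) * card {..<nat (-m)}" by (rule card_mod_le) (use assms in auto)
  also have "\<dots> \<le> (N div B) * nat \<bar>m\<bar>" using False by simp
  finally show ?thesis .
qed

lemma card_small_ints:
  fixes D :: real assumes "D \<ge> 0"
  shows "real (card {m::int. 0 < \<bar>m\<bar> \<and> real_of_int \<bar>m\<bar> < D}) \<le> 2 * D"
proof -
  have "{m::int. 0 < \<bar>m\<bar> \<and> real_of_int \<bar>m\<bar> < D} \<subseteq> {-\<lfloor>D\<rfloor>..-1} \<union> {1..\<lfloor>D\<rfloor>}"
  proof
    fix m assume "m \<in> {m::int. 0 < \<bar>m\<bar> \<and> real_of_int \<bar>m\<bar> < D}"
    hence h: "0 < \<bar>m\<bar> \<and> real_of_int \<bar>m\<bar> < D" by simp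
    hence "\<bar>m\<bar> \<le> \<lfloor>D\<rfloor>" by (simp add: le_floor_iff)
    thus "m \<in> {-\<lfloor>D\<rfloor>..-1} \<union> {1..\<lfloor>D\<rfloor>}" using h by auto
  qed
  hence "card {m::int. 0 < \<bar>m\<bar> \<and> real_of_int \<bar>m\<bar> < D} \<le> card ({-\<lfloor>D\<rfloor>..-1} \<union> {1..\<lfloor>D\<rfloor>})"
    by (intro card_mono) simp_all
  also have "\<dots> \<le> card {-\<lfloor>D\<rfloor>..-1} + card {1..\<lfloor>D\<rfloor>}" by (rule card_Un_le)
  also have "\<dots> = 2 * nat \<lfloor>D\<rfloor>" by simp
  finally have c: "card {m::int. 0 < \<bar>m\<bar> \<and> real_of_int \<bar>m\<bar> < D} \<le> 2 * nat \<lfloor>D\<rfloor>" .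
  have f: "real (nat \<lfloor>D\<rfloor>) \<le> D" using assms by simp
  have "real (card {m::int. 0 < \<bar>m\<bar> \<and> real_of_int \<bar>m\<bar> < D}) \<le> real (2 * nat \<lfloor>D\<rfloor>)"
    using c by (simp only: of_nat_le_iff)
  also have "\<dots> \<le> 2 * D" using f by simp
  finally show ?thesis .
qed

lemma pair_sum_bound:
  fixes N B :: nat and D :: real
  assumes B: "B > 0" "B dvd N" and D: "D \<ge> 0"
  shows "(\<Sum>i<N. \<Sum>j<N. if i div B \<noteq> j div B \<and> 0 < \<bar>int j - int i\<bar> \<and> real_of_int \<bar>int j - int i\<bar> < D
             then 1 / real_of_int \<bar>int j - int i\<bar> else 0) \<le> 2 * D * real (N div B)"
proof -
  define F where "F i j = (if i div B \<noteq> j div B \<and> 0 < \<bar>int j - int i\<bar> \<and> real_of_int \<bar>int j - int i\<bar> < D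
             then 1 / real_of_int \<bar>int j - int i\<bar> else 0)" for i j :: nat
  define G where "G i m = (if 0 \<le> int i + m \<and> int i + m < int N then F i (nat (int i + m)) else 0)" for i :: nat and m :: int
  have A: "(\<Sum>j<N. F i j) = (\<Sum>m\<in>{-int N..int N}. G i m)" if i: "i < N" for i
  proof -
    have "(\<Sum>m\<in>{-int N..int N}. G i m) =
          (\<Sum>m\<in>{m\<in>{-int N..int N}. 0 \<le> int i + m \<and> int i + m < int N}. F i (nat (int i + m)))"
      unfolding G_def by (rule sum.inter_filter[symmetric]) simp
    also have "{m\<in>{-int N..int N}. 0 \<le> int i + m \<and> int i + m < int N} = (\<lambda>j. int j - int i) ` {..<N}"
    proof (intro equalityI subsetI)
      fix m assume "m \<in> {m\<in>{-int N..int N}. 0 \<le> int i + m \<and> int i + m < int N}"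
      hence m: "0 \<le> int i + m" "int i + m < int N" by auto
      show "m \<in> (\<lambda>j. int j - int i) ` {..<N}"
        by (rule image_eqI[where x="nat (int i + m)"]) (use m in auto)
    next
      fix m assume "m \<in> (\<lambda>j. int j - int i) ` {..<N}"
      then obtain j where "j < N" "m = int j - int i" by auto
      thus "m \<in> {m\<in>{-int N..int N}. 0 \<le> int i + m \<and> int i + m < int N}" using i by auto
    qed
    also have "(\<Sum>m\<in>(\<lambda>j. int j - int i) ` {..<N}. F i (nat (int i + m))) = (\<Sum>j<N. F i (nat (int i + (int j - int i))))"
      by (rule sum.reindex_cong[where l="\<lambda>j. int j - int i"]) (auto simp: inj_on_def)
    also have "\<dots> = (\<Sum>j<N. F i j)" by simp
    finally show ?thesis ..
  qed
  have C: "(\<Sum>i<N. G i m) \<le> (if 0 < \<bar>m\<bar> \<and> real_of_int \<bar>m\<bar> < D then real (N div B) else 0)" for m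
  proof (cases "0 < \<bar>m\<bar> \<and> real_of_int \<bar>m\<bar> < D")
    case False
    have "G i m = 0" for i unfolding G_def F_def using False by auto
    thus ?thesis using False by simp
  next
    case True
    define P where "P i = (0 \<le> int i + m \<and> i div B \<noteq> nat (int i + m) div B)" for i
    have "G i m \<le> (if P i then 1 / real_of_int \<bar>m\<bar> else 0)" for i
      unfolding G_def F_def P_def using True by auto
    hence "(\<Sum>i<N. G i m) \<le> (\<Sum>i<N. if P i then 1 / real_of_int \<bar>m\<bar> else 0)"
      by (intro sum_mono)
    also have "\<dots> = (\<Sum>i\<in>{i\<in>{..<N}. P i}. 1 / real_of_int \<bar>m\<bar>)"
      by (rule sum.inter_filter[symmetric]) simp
    also have "\<dots> = real (card {i\<in>{..<N}. P i}) / real_of_int \<bar>m\<bar>" by simp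
    also have "\<dots> \<le> real ((N div B) * nat \<bar>m\<bar>) / real_of_int \<bar>m\<bar>"
    proof (intro divide_right_mono)
      have "{i\<in>{..<N}. P i} = {i. i < N \<and> 0 \<le> int i + m \<and> i div B \<noteq> nat (int i + m) div B}"
        unfolding P_def by auto
      hence "card {i\<in>{..<N}. P i} \<le> (N div B) * nat \<bar>m\<bar>" using cross_count[OF B, of m] by simp
      thus "real (card {i\<in>{..<N}. P i}) \<le> real ((N div B) * nat \<bar>m\<bar>)" by (simp only: of_nat_le_iff)
    qed simp
    also have "\<dots> = real (N div B)" using True by simp
    finally show ?thesis using True by simp
  qed
  have "(\<Sum>i<N. \<Sum>j<N. F i j) = (\<Sum>i<N. \<Sum>m\<in>{-int N..int N}. G i m)"
    by (rule sum.cong) (auto simp: A)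
  also have "\<dots> = (\<Sum>m\<in>{-int N..int N}. \<Sum>i<N. G i m)" by (rule sum.swap)
  also have "\<dots> \<le> (\<Sum>m\<in>{-int N..int N}. if 0 < \<bar>m\<bar> \<and> real_of_int \<bar>m\<bar> < D then real (N div B) else 0)"
    by (intro sum_mono C)
  also have "\<dots> = (\<Sum>m\<in>{m\<in>{-int N..int N}. 0 < \<bar>m\<bar> \<and> real_of_int \<bar>m\<bar> < D}. real (N div B))"
    by (rule sum.inter_filter[symmetric]) simp
  also have "\<dots> = real (card {m\<in>{-int N..int N}. 0 < \<bar>m\<bar> \<and> real_of_int \<bar>m\<bar> < D}) * real (N div B)" by simp
  also have "\<dots> \<le> (2 * D) * real (N div B)"
  proof (intro mult_right_mono)
    have "card {m\<in>{-int N..int N}. 0 < \<bar>m\<bar> \<and> real_of_int \<bar>m\<bar> < D} \<le> card {m::int. 0 < \<bar>m\<bar> \<and> real_of_int \<bar>m\<bar> < D}"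
    proof (rule card_mono)
      have "{m::int. 0 < \<bar>m\<bar> \<and> real_of_int \<bar>m\<bar> < D} \<subseteq> {-\<lfloor>D\<rfloor>..\<lfloor>D\<rfloor>}"
      proof
        fix m assume "m \<in> {m::int. 0 < \<bar>m\<bar> \<and> real_of_int \<bar>m\<bar> < D}"
        hence "real_of_int \<bar>m\<bar> < D" by simp
        hence "\<bar>m\<bar> \<le> \<lfloor>D\<rfloor>" by (simp add: le_floor_iff)
        thus "m \<in> {-\<lfloor>D\<rfloor>..\<lfloor>D\<rfloor>}" by auto
      qed
      thus "finite {m::int. 0 < \<bar>m\<bar> \<and> real_of_int \<bar>m\<bar> < D}" by (rule finite_subset) simp
    qed auto
    hence "real (card {m\<in>{-int N..int N}. 0 < \<bar>m\<bar> \<and> real_of_int \<bar>m\<bar> < D}) \<le> real (card {m::int. 0 < \<bar>m\<bar> \<and> real_of_int \<bar>m\<bar> < D})"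
      by (simp only: of_nat_le_iff)
    also have "\<dots> \<le> 2 * D" by (rule card_small_ints[OF D])
    finally show "real (card {m\<in>{-int N..int N}. 0 < \<bar>m\<bar> \<and> real_of_int \<bar>m\<bar> < D}) \<le> 2 * D" .
  qed simp
  finally show ?thesis unfolding F_def by simp
qed

lemma grid_sq_mem: "(x,y) \<in> grid_sq L n i j \<longleftrightarrow>
   real i / real L ^ n \<le> x \<and> x \<le> real (i+1) / real L ^ n \<and> real j / real L ^ n \<le> y \<and> y \<le> real (j+1) / real L ^ n"
  by (simp add: grid_sq_def)

lemma center_in:
  assumes "L > 0"
  shows "((2*real i+1)/(2*real L^n), (2*real j+1)/(2*real L^n)) \<in> grid_sq L n i j"
proof -
  have P: "real L ^ n > 0" using assms by simp
  have a: "real k / real L ^ n \<le> (2*real k+1)/(2*real L^n)" for k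
    using P by (simp add: field_simps)
  have b: "(2*real k+1)/(2*real L^n) \<le> real (k+1) / real L ^ n" for k
    using P by (simp add: field_simps)
  show ?thesis unfolding grid_sq_mem using a b by blast
qed

lemma div_le_cancel_pos: fixes x y c :: real shows "c > 0 \<Longrightarrow> x / c \<le> y / c \<Longrightarrow> x \<le> y"
  by (simp add: divide_le_cancel)

lemma coord_unique:
  fixes P :: real
  assumes "P > 0" "real i / P \<le> (2*real a+1)/(2*P)" "(2*real a+1)/(2*P) \<le> real (i+1) / P"
  shows "i = a"
proof -
  have "2 * real i \<le> 2*real a+1" using assms(1,2) by (simp add: field_simps)
  hence 1: "i \<le> a" by linarith
  have e: "real (i+1) / P = (2 * real (i+1)) / (2*P)" using assms(1) by (simp add: field_simps)
  have "(2*real a+1)/(2*P) \<le> (2 * real (i+1)) / (2*P)" using assms(3) e by simp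
  hence "2*real a+1 \<le> 2 * real (i+1)" by (rule div_le_cancel_pos[rotated]) (use assms(1) in simp)
  hence 2: "a \<le> i" by simp
  show ?thesis using 1 2 by simp
qed

lemma coord_parent:
  fixes P :: real
  assumes L: "L > 0" and "P > 0" "real i / P \<le> (2*real a+1)/(2*(P * real L))" "(2*real a+1)/(2*(P*real L)) \<le> real (i+1) / P"
  shows "i = a div L"
proof -
  have PL: "P * real L > 0" using assms by simp
  have "2 * real i * real L \<le> 2*real a+1" using assms(2,3) PL by (simp add: field_simps)
  hence "real (2 * i * L) \<le> real (2*a+1)" by simp
  hence "2 * i * L \<le> 2*a+1" by (simp only: of_nat_le_iff)
  hence 1: "i * L \<le> a" by linarith
  have e: "real (i+1) / P = (2 * real (i+1) * real L) / (2*(P * real L))" using L assms(2) by (simp add: field_simps)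
  have "(2*real a+1)/(2*(P*real L)) \<le> (2 * real (i+1) * real L) / (2*(P * real L))" using assms(4) e by simp
  hence "2*real a+1 \<le> 2 * real (i+1) * real L" by (rule div_le_cancel_pos[rotated]) (use PL in simp)
  hence "real (2*a+1) \<le> real (2 * (i+1) * L)" by (simp add: algebra_simps)
  hence "2*a+1 \<le> 2 * (i+1) * L" by (simp only: of_nat_le_iff)
  hence 2: "a < (i+1) * L" by linarith
  have "a div L = i" by (rule div_nat_eqI) (use 1 2 in \<open>simp_all add: mult.commute\<close>)
  thus ?thesis by simp
qed

lemma adm_cc:
  assumes "admissible L S"
  shows "\<exists>cc. \<forall>n. (\<forall>i<L ^ n. cc n i < L ^ n) \<and> S n = (\<Union>i<L ^ n. grid_sq L n i (cc n i))"
proof -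
  have "\<forall>n. \<exists>c. (\<forall>i<L ^ n. c i < L ^ n) \<and> S n = (\<Union>i<L ^ n. grid_sq L n i (c i))"
    using assms unfolding admissible_def by blast
  thus ?thesis by (rule choice)
qed

lemma cc_parent:
  assumes L: "L > 0" and mono: "S (Suc n) \<subseteq> S n"
    and H: "\<And>n. S n = (\<Union>i<L ^ n. grid_sq L n i (cc n i))"
    and i: "i < L ^ Suc n"
  shows "cc (Suc n) i div L = cc n (i div L) \<and> True"
proof -
  define P where "P = real L ^ n"
  have P: "P > 0" using L by (simp add: P_def)
  have PS: "real L ^ Suc n = P * real L" by (simp add: P_def)
  define p where "p = ((2*real i+1)/(2*real L^Suc n), (2*real (cc (Suc n) i)+1)/(2*real L^Suc n))"
  have "p \<in> grid_sq L (Suc n) i (cc (Suc n) i)" unfolding p_def by (rule center_in[OF L])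
  hence "p \<in> S (Suc n)" using i H[of "Suc n"] by blast
  hence "p \<in> S n" using mono by blast
  then obtain i0 where i0: "i0 < L ^ n" "p \<in> grid_sq L n i0 (cc n i0)" using H[of n] by blast
  have m: "real i0 / P \<le> (2*real i+1)/(2*(P * real L))" "(2*real i+1)/(2*(P * real L)) \<le> real (i0+1) / P"
    "real (cc n i0) / P \<le> (2*real (cc (Suc n) i)+1)/(2*(P * real L))"
    "(2*real (cc (Suc n) i)+1)/(2*(P * real L)) \<le> real (cc n i0+1) / P"
    using i0(2) unfolding p_def grid_sq_mem PS[symmetric] P_def by (auto simp: ac_simps)
  have "i0 = i div L" by (rule coord_parent[OF L P m(1,2)])
  moreover have "cc n i0 = cc (Suc n) i div L" by (rule coord_parent[OF L P m(3,4)])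
  ultimately show ?thesis by simp
qed

lemma cc_anc:
  assumes L: "L > 0" and mono: "\<And>n. S (Suc n) \<subseteq> S n"
    and H: "\<And>n. S n = (\<Union>i<L ^ n. grid_sq L n i (cc n i))"
  shows "r \<le> n \<Longrightarrow> i < L ^ n \<Longrightarrow> cc n i div L ^ r = cc (n - r) (i div L ^ r)"
proof (induction r arbitrary: n i)
  case 0
  thus ?case by simp
next
  case (Suc r)
  have "cc n i div L ^ Suc r = (cc n i div L ^ r) div L" by (simp only: power_Suc2 div_mult2_eq)
  also have "\<dots> = cc (n - r) (i div L ^ r) div L" using Suc by simp
  also have "n - r = Suc (n - Suc r)" using Suc.prems by simp
  also have "i div L ^ r < L ^ Suc (n - Suc r)"
  proof -
    have e: "Suc (n - Suc r) + r = n" using Suc.prems(1) by simp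
    have "L ^ n = L ^ Suc (n - Suc r) * L ^ r" by (simp only: power_add[symmetric] e)
    hence "i < L ^ Suc (n - Suc r) * L ^ r" using Suc.prems(2) by simp
    thus ?thesis by (rule less_mult_imp_div_less)
  qed
  hence "cc (Suc (n - Suc r)) (i div L ^ r) div L = cc (n - Suc r) (i div L ^ r div L)"
    using cc_parent[OF L mono H] by blast
  also have "i div L ^ r div L = i div L ^ Suc r" by (simp only: power_Suc2 div_mult2_eq)
  finally show ?case .
qed

lemma div_eq_close:
  fixes a b B :: nat
  assumes "B > 0" "a div B = b div B"
  shows "\<bar>int a - int b\<bar> < int B"
proof -
  have a: "int a = int B * int (a div B) + int (a mod B)"
    by (simp only: of_nat_mult[symmetric] of_nat_add[symmetric] mult_div_mod_eq)
  have b: "int b = int B * int (b div B) + int (b mod B)"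
    by (simp only: of_nat_mult[symmetric] of_nat_add[symmetric] mult_div_mod_eq)
  have "a mod B < B" "b mod B < B" using assms(1) by simp_all
  hence m: "int (a mod B) < int B" "int (b mod B) < int B" by simp_all
  have e: "int a - int b = int (a mod B) - int (b mod B)" using a b assms(2) by simp
  show ?thesis unfolding abs_less_iff e using m by linarith
qed

lemma cc_close:
  assumes L: "L > 0" and mono: "\<And>n. S (Suc n) \<subseteq> S n"
    and H: "\<And>n. S n = (\<Union>i<L ^ n. grid_sq L n i (cc n i))"
    and "r \<le> n" "i < L ^ n" "i' < L ^ n" "i div L ^ r = i' div L ^ r"
  shows "\<bar>int (cc n i) - int (cc n i')\<bar> < int (L ^ r)"
proof (rule div_eq_close)
  show "L ^ r > 0" using L by simp
  show "cc n i div L ^ r = cc n i' div L ^ r"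
    using cc_anc[OF L mono H, of r n i] cc_anc[OF L mono H, of r n i'] assms(4-7) by simp
qed

lemma squares_cols:
  assumes L: "L > 0" and H: "S n = (\<Union>i<L ^ n. grid_sq L n i (cc n i))"
    and Q: "Q \<in> squares L S n"
  shows "\<exists>i<L ^ n. Q = grid_sq L n i (cc n i)"
proof -
  obtain a b where ab: "a < L ^ n" "b < L ^ n" "Q = grid_sq L n a b" "Q \<subseteq> S n"
    using Q unfolding squares_def grid_def by blast
  define P where "P = real L ^ n"
  have P: "P > 0" using L by (simp add: P_def)
  define p where "p = ((2*real a+1)/(2*real L^n), (2*real b+1)/(2*real L^n))"
  have "p \<in> Q" unfolding p_def ab(3) by (rule center_in[OF L])
  hence "p \<in> S n" using ab(4) by blast
  then obtain i where i: "i < L ^ n" "p \<in> grid_sq L n i (cc n i)" using H by blast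
  have m: "real i / P \<le> (2*real a+1)/(2*P)" "(2*real a+1)/(2*P) \<le> real (i+1) / P"
    "real (cc n i) / P \<le> (2*real b+1)/(2*P)" "(2*real b+1)/(2*P) \<le> real (cc n i+1) / P"
    using i(2) unfolding p_def grid_sq_mem P_def by auto
  have "i = a" by (rule coord_unique[OF P m(1,2)])
  moreover have "cc n i = b" by (rule coord_unique[OF P m(3,4)])
  ultimately show ?thesis using i(1) ab(3) by blast
qed

lemma mvt_bound:
  fixes g g' :: "real \<Rightarrow> real"
  assumes "a \<le> b" and der: "\<And>x. a \<le> x \<Longrightarrow> x \<le> b \<Longrightarrow> (g has_real_derivative g' x) (at x)"
    and lb: "\<And>x. a \<le> x \<Longrightarrow> x \<le> b \<Longrightarrow> \<delta> \<le> \<bar>g' x\<bar>"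
  shows "\<delta> * (b - a) \<le> \<bar>g b - g a\<bar>"
proof (cases "a = b")
  case True thus ?thesis by simp
next
  case False
  hence "a < b" using assms(1) by simp
  then obtain z where z: "a < z" "z < b" "g b - g a = (b - a) * g' z" using MVT2[of a b g g'] der by blast
  have "\<delta> \<le> \<bar>g' z\<bar>" using lb z by simp
  hence "\<delta> * (b - a) \<le> \<bar>g' z\<bar> * (b - a)" using \<open>a < b\<close> by (intro mult_right_mono) simp_all
  also have "\<dots> = \<bar>g b - g a\<bar>" using z(3) \<open>a < b\<close> by (simp add: abs_mult)
  finally show ?thesis .
qed

lemma Theta_facts:
  assumes L: "L \<ge> 2" and k: "k \<ge> 1" and th: "\<theta> \<in> Theta L k"
  shows "0 < \<theta>" "\<theta> < pi/2" "sin \<theta> > 0" "cos \<theta> > 0" "sin \<theta> \<ge> 4/5"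
        "cos \<theta> * real L ^ k \<le> sin \<theta>" "cos \<theta> * real L ^ k \<le> 1"
proof -
  have Lk: "real L ^ k \<ge> 2"
  proof -
    have a: "real L ^ k \<ge> real L ^ 1" using L k by (intro power_increasing) simp_all
    have b: "real L \<ge> 2" using L by simp
    from a b show ?thesis unfolding power_one_right by linarith
  qed
  have th1: "0 \<le> \<theta>" "\<theta> \<le> pi/2" and tn: "tan \<theta> \<ge> real L ^ k"
    using th unfolding Theta_def by auto
  have "\<theta> \<noteq> pi/2"
  proof
    assume "\<theta> = pi/2"
    hence "tan \<theta> = 0" by (simp only: tan_def cos_pi_half) simp
    thus False using tn Lk by simp
  qed
  hence t2: "\<theta> < pi/2" using th1 by simp
  have "\<theta> \<noteq> 0" using tn Lk by auto
  hence t1: "0 < \<theta>" using th1 by simp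
  show "0 < \<theta>" "\<theta> < pi/2" by fact+
  have s: "sin \<theta> > 0" using t1 t2 by (intro sin_gt_zero) simp_all
  have c: "cos \<theta> > 0" using t1 t2 by (intro cos_gt_zero) simp_all
  show "sin \<theta> > 0" "cos \<theta> > 0" by fact+
  have "sin \<theta> / cos \<theta> \<ge> real L ^ k" using tn by (simp add: tan_def)
  thus cs: "cos \<theta> * real L ^ k \<le> sin \<theta>" using c by (simp add: field_simps)
  have "sin \<theta> \<le> 1" by simp
  thus "cos \<theta> * real L ^ k \<le> 1" using cs by linarith
  have "2 * cos \<theta> \<le> cos \<theta> * real L ^ k" using Lk c by simp
  hence c2: "2 * cos \<theta> \<le> sin \<theta>" using cs by linarith
  have sc: "sin \<theta> ^ 2 + cos \<theta> ^ 2 = 1" by simp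
  show "sin \<theta> \<ge> 4/5"
  proof (rule ccontr)
    assume "\<not> sin \<theta> \<ge> 4/5"
    hence a: "sin \<theta> < 4/5" by simp
    have "sin \<theta> ^ 2 < (4/5)^2" using a s by (intro power_strict_mono) simp_all
    also have "(4/5::real)^2 = 16/25" by (simp add: power2_eq_square)
    finally have x1: "sin \<theta> ^ 2 < 16/25" .
    have "(2 * cos \<theta>) ^ 2 \<le> sin \<theta> ^ 2" using c2 c by (intro power_mono) simp_all
    moreover have "(2 * cos \<theta>) ^ 2 = 4 * (1 - sin \<theta> ^ 2)" by (simp add: power_mult_distrib cos_squared_eq)
    ultimately have "4 * (1 - sin \<theta> ^ 2) \<le> sin \<theta> ^ 2" by simp
    thus False using x1 by (simp add: field_simps)
  qed
qed

lemma sin_ge_between: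
  assumes "\<theta>1 \<in> Theta L k" "\<theta>2 \<in> Theta L k" "L \<ge> 2" "k \<ge> 1" "\<theta>1 \<le> x" "x \<le> \<theta>2"
  shows "sin x \<ge> 4/5" "cos x > 0" "sin x > 0"
proof -
  note f1 = Theta_facts[OF assms(3,4,1)] and f2 = Theta_facts[OF assms(3,4,2)]
  have "sin \<theta>1 \<le> sin x" using f1 f2 assms(5,6) by (intro sin_monotone_2pi_le) simp_all
  thus "sin x \<ge> 4/5" using f1 by linarith
  show "cos x > 0" using f1 f2 assms(5,6) by (intro cos_gt_zero) simp_all
  show "sin x > 0" using f1 f2 assms(5,6) by (intro sin_gt_zero) simp_all
qed

lemma Theta_diam_le:
  assumes "\<theta>1 \<in> Theta L k" "\<theta>2 \<in> Theta L k" "L \<ge> 2" "k \<ge> 1" "\<theta>1 \<le> \<theta>2"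
  shows "\<theta>2 - \<theta>1 \<le> (5/4) / real L ^ k"
proof -
  note f1 = Theta_facts[OF assms(3,4,1)] and f2 = Theta_facts[OF assms(3,4,2)]
  have Lk: "real L ^ k > 0" using assms(3) by simp
  have "4/5 * (\<theta>2 - \<theta>1) \<le> \<bar>cos \<theta>2 - cos \<theta>1\<bar>"
  proof (rule mvt_bound[where g' = "\<lambda>x. - sin x"])
    show "\<theta>1 \<le> \<theta>2" by fact
    show "(cos has_real_derivative - sin x) (at x)" for x by (rule DERIV_cos)
    show "4/5 \<le> \<bar>- sin x\<bar>" if "\<theta>1 \<le> x" "x \<le> \<theta>2" for x
      using sin_ge_between[OF assms(1-4) that] by simp
  qed
  also have "\<bar>cos \<theta>2 - cos \<theta>1\<bar> \<le> 1 / real L ^ k"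
  proof -
    have "cos \<theta>1 \<le> 1 / real L ^ k" "cos \<theta>2 \<le> 1 / real L ^ k" using f1 f2 Lk by (simp_all add: field_simps)
    thus ?thesis using f1 f2 by linarith
  qed
  finally show ?thesis by (simp add: field_simps)
qed

lemma Theta_diam:
  assumes "\<theta>1 \<in> Theta L k" "\<theta>2 \<in> Theta L k" "L \<ge> 2" "k \<ge> 1"
  shows "\<bar>\<theta>1 - \<theta>2\<bar> \<le> (5/4) / real L ^ k"
proof (cases "\<theta>1 \<le> \<theta>2")
  case True thus ?thesis using Theta_diam_le[OF assms True] by simp
next
  case False thus ?thesis using Theta_diam_le[OF assms(2,1,3,4)] by simp
qed

lemma phi_sign_pos:
  fixes m d :: real
  assumes th: "\<theta> \<in> Theta L k" and L: "L \<ge> 2" and k: "k \<ge> 1" and m: "m \<ge> 5"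
    and h: "\<bar>m * sin \<theta> - d * cos \<theta>\<bar> \<le> 2"
  shows "d > 0 \<and> m * real L ^ k \<le> 2 * d"
proof -
  note f = Theta_facts[OF L k th]
  have ms: "m * sin \<theta> \<ge> 5 * (4/5)" using m f by (intro mult_mono) simp_all
  have d: "d > 0"
  proof (rule ccontr)
    assume "\<not> d > 0"
    hence "d * cos \<theta> \<le> 0" using f by (simp add: mult_nonpos_nonneg)
    thus False using ms h by linarith
  qed
  have dc: "d * cos \<theta> \<ge> m * sin \<theta> / 2" using ms h by linarith
  have "d * (cos \<theta> * real L ^ k) \<le> d * sin \<theta>" using d f by (intro mult_left_mono) simp_all
  moreover have "m * sin \<theta> / 2 * real L ^ k \<le> d * cos \<theta> * real L ^ k" using dc L by (intro mult_right_mono) simp_all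
  ultimately have "(m * real L ^ k / 2) * sin \<theta> \<le> d * sin \<theta>" by (simp add: algebra_simps)
  hence "m * real L ^ k / 2 \<le> d" using f by (simp add: mult_le_cancel_right_pos)
  thus ?thesis using d by simp
qed

lemma phi_sign:
  fixes m d :: real
  assumes th: "\<theta> \<in> Theta L k" and L: "L \<ge> 2" and k: "k \<ge> 1" and m: "\<bar>m\<bar> \<ge> 5"
    and h: "\<bar>m * sin \<theta> - d * cos \<theta>\<bar> \<le> 2"
  shows "m * d > 0 \<and> \<bar>m\<bar> * real L ^ k \<le> 2 * \<bar>d\<bar>"
proof (cases "m > 0")
  case True
  hence "m \<ge> 5" using m by simp
  from phi_sign_pos[OF th L k this h] True show ?thesis by simp
next
  case False
  hence "-m \<ge> 5" using m by simp
  moreover have "\<bar>(-m) * sin \<theta> - (-d) * cos \<theta>\<bar> \<le> 2" using h by simp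
  ultimately have r: "-d > 0 \<and> (-m) * real L ^ k \<le> 2 * (-d)" by (rule phi_sign_pos[OF th L k])
  have "m < 0" using False m by auto
  moreover have "d < 0" using r by simp
  ultimately show ?thesis using r by (simp add: mult_neg_neg abs_of_neg)
qed

lemma phi_diam_le:
  fixes m d :: real
  assumes t1: "\<theta>1 \<in> Theta L k" and t2: "\<theta>2 \<in> Theta L k" and L: "L \<ge> 2" and k: "k \<ge> 1" and m: "\<bar>m\<bar> \<ge> 5"
    and h1: "\<bar>m * sin \<theta>1 - d * cos \<theta>1\<bar> \<le> 2" and h2: "\<bar>m * sin \<theta>2 - d * cos \<theta>2\<bar> \<le> 2"
    and le: "\<theta>1 \<le> \<theta>2"
  shows "\<theta>2 - \<theta>1 \<le> 5 / \<bar>d\<bar>"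
proof -
  have md: "m * d > 0" using phi_sign[OF t1 L k m h1] by simp
  hence d0: "\<bar>d\<bar> > 0" by auto
  have "4/5 * \<bar>d\<bar> * (\<theta>2 - \<theta>1) \<le> \<bar>(m * sin \<theta>2 - d * cos \<theta>2) - (m * sin \<theta>1 - d * cos \<theta>1)\<bar>"
  proof (rule mvt_bound[where g = "\<lambda>x. m * sin x - d * cos x" and g' = "\<lambda>x. m * cos x + d * sin x"])
    show "\<theta>1 \<le> \<theta>2" by fact
    show "((\<lambda>x. m * sin x - d * cos x) has_real_derivative m * cos x + d * sin x) (at x)" for x
      by (auto intro!: derivative_eq_intros)
    show "4/5 * \<bar>d\<bar> \<le> \<bar>m * cos x + d * sin x\<bar>" if "\<theta>1 \<le> x" "x \<le> \<theta>2" for x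
    proof -
      note sb = sin_ge_between[OF t1 t2 L k that]
      have "4/5 * \<bar>d\<bar> \<le> sin x * \<bar>d\<bar>" using sb by (intro mult_right_mono) simp_all
      also have "\<dots> \<le> \<bar>m * cos x + d * sin x\<bar>"
      proof (cases "m > 0")
        case True
        hence "d > 0" using md by (simp add: zero_less_mult_iff)
        moreover have "m * cos x \<ge> 0" using True sb by simp
        ultimately show ?thesis using sb by (simp add: mult.commute)
      next
        case False
        hence "m < 0" using m by auto
        hence "d < 0" using md by (simp add: zero_less_mult_iff)
        moreover have "m * cos x \<le> 0" using \<open>m < 0\<close> sb by (simp add: mult_nonpos_nonneg)
        moreover have "d * sin x \<le> 0" using \<open>d < 0\<close> sb by (simp add: mult_nonpos_nonneg)
        ultimately show ?thesis using sb by (simp add: abs_mult mult.commute)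
      qed
      finally show ?thesis .
    qed
  qed
  also have "\<dots> \<le> 4" using h1 h2 by linarith
  finally have "4/5 * \<bar>d\<bar> * (\<theta>2 - \<theta>1) \<le> 4" .
  thus ?thesis using d0 by (simp add: field_simps)
qed

lemma diam_cover:
  fixes A :: "real set"
  assumes D: "D \<ge> 0" and h: "\<And>x y. x \<in> A \<Longrightarrow> y \<in> A \<Longrightarrow> \<bar>x - y\<bar> \<le> D"
  shows "\<exists>lo hi. lo \<le> hi \<and> hi - lo \<le> 2 * D \<and> A \<subseteq> {lo..hi}"
proof (cases "A = {}")
  case True
  thus ?thesis using D by (intro exI[of _ 0]) auto
next
  case False
  then obtain x0 where x0: "x0 \<in> A" by auto
  have "A \<subseteq> {x0 - D..x0 + D}"
  proof
    fix y assume "y \<in> A"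
    hence "\<bar>y - x0\<bar> \<le> D" using h x0 by blast
    thus "y \<in> {x0 - D..x0 + D}" by (auto simp: abs_le_iff)
  qed
  thus ?thesis using D by (intro exI[of _ "x0 - D"] exI[of _ "x0 + D"]) auto
qed

definition wpair :: "nat \<Rightarrow> nat \<Rightarrow> real \<Rightarrow> real \<Rightarrow> real" where
  "wpair L k m d = (if \<bar>m\<bar> < 5 then 5 / (2 * real L ^ k)
      else if \<bar>m\<bar> * real L ^ k \<le> 2 * \<bar>d\<bar> then 20 / (\<bar>m\<bar> * real L ^ k) else 0)"

lemma pair_cover:
  fixes m d :: real
  assumes L: "L \<ge> 2" and k: "k \<ge> 1"
  shows "\<exists>lo hi. lo \<le> hi \<and> hi - lo \<le> wpair L k m d \<and>
           {\<theta> \<in> Theta L k. \<bar>m * sin \<theta> - d * cos \<theta>\<bar> \<le> 2} \<subseteq> {lo..hi}"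
proof -
  have Lk: "real L ^ k > 0" using L by simp
  consider (a) "\<bar>m\<bar> < 5" | (b) "\<not> \<bar>m\<bar> < 5" "\<bar>m\<bar> * real L ^ k \<le> 2 * \<bar>d\<bar>"
    | (c) "\<not> \<bar>m\<bar> < 5" "\<not> \<bar>m\<bar> * real L ^ k \<le> 2 * \<bar>d\<bar>" by blast
  thus ?thesis
  proof cases
    case a
    have "\<exists>lo hi. lo \<le> hi \<and> hi - lo \<le> 2 * ((5/4) / real L ^ k) \<and>
           {\<theta> \<in> Theta L k. \<bar>m * sin \<theta> - d * cos \<theta>\<bar> \<le> 2} \<subseteq> {lo..hi}"
      by (rule diam_cover) (use Lk Theta_diam[OF _ _ L k] in auto)
    moreover have "2 * ((5/4) / real L ^ k) = wpair L k m d" using a by (simp add: wpair_def)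
    ultimately show ?thesis by simp
  next
    case b
    have m: "\<bar>m\<bar> \<ge> 5" using b by simp
    have d0: "\<bar>d\<bar> > 0" using b m Lk
      by (smt (verit) mult_pos_pos)
    have "\<exists>lo hi. lo \<le> hi \<and> hi - lo \<le> 2 * (5 / \<bar>d\<bar>) \<and>
           {\<theta> \<in> Theta L k. \<bar>m * sin \<theta> - d * cos \<theta>\<bar> \<le> 2} \<subseteq> {lo..hi}"
    proof (rule diam_cover)
      show "5 / \<bar>d\<bar> \<ge> 0" by simp
      fix x y assume x: "x \<in> {\<theta> \<in> Theta L k. \<bar>m * sin \<theta> - d * cos \<theta>\<bar> \<le> 2}"
        and y: "y \<in> {\<theta> \<in> Theta L k. \<bar>m * sin \<theta> - d * cos \<theta>\<bar> \<le> 2}"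
      show "\<bar>x - y\<bar> \<le> 5 / \<bar>d\<bar>"
      proof (cases "x \<le> y")
        case True
        thus ?thesis using phi_diam_le[OF _ _ L k m, of x y d] x y by simp
      next
        case False
        thus ?thesis using phi_diam_le[OF _ _ L k m, of y x d] x y by simp
      qed
    qed
    moreover have "2 * (5 / \<bar>d\<bar>) \<le> wpair L k m d"
    proof -
      have "wpair L k m d = 20 / (\<bar>m\<bar> * real L ^ k)" using b by (simp add: wpair_def)
      moreover have "10 / \<bar>d\<bar> \<le> 20 / (\<bar>m\<bar> * real L ^ k)"
        using b d0 m Lk by (simp add: field_simps)
      ultimately show ?thesis by simp
    qed
    ultimately show ?thesis by force
  next
    case c
    have m: "\<bar>m\<bar> \<ge> 5" using c by simp
    have "{\<theta> \<in> Theta L k. \<bar>m * sin \<theta> - d * cos \<theta>\<bar> \<le> 2} = {}"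
      using phi_sign[OF _ L k m] c by auto
    moreover have "wpair L k m d = 0" using c by (simp add: wpair_def)
    ultimately show ?thesis by (intro exI[of _ 0]) auto
  qed
qed

lemma nn_integral_sum_indicator:
  fixes X :: "'a \<Rightarrow> real set" and c :: "'a \<Rightarrow> real"
  assumes "finite A" "\<And>p. p \<in> A \<Longrightarrow> c p \<ge> 0" "\<And>p. p \<in> A \<Longrightarrow> X p \<in> sets lborel"
  shows "(\<integral>\<^sup>+x. ennreal (\<Sum>p\<in>A. c p * indicator (X p) x) \<partial>lborel) = (\<Sum>p\<in>A. ennreal (c p) * emeasure lborel (X p))"
proof -
  have "(\<integral>\<^sup>+x. ennreal (\<Sum>p\<in>A. c p * indicator (X p) x) \<partial>lborel) = (\<integral>\<^sup>+x. (\<Sum>p\<in>A. ennreal (c p) * indicator (X p) x) \<partial>lborel)"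
  proof (rule nn_integral_cong)
    fix x
    have "ennreal (\<Sum>p\<in>A. c p * indicator (X p) x) = (\<Sum>p\<in>A. ennreal (c p * indicator (X p) x))"
      by (rule sum_ennreal[symmetric]) (use assms(2) in auto)
    also have "\<dots> = (\<Sum>p\<in>A. ennreal (c p) * indicator (X p) x)"
      by (rule sum.cong) (auto simp: ennreal_mult' indicator_def)
    finally show "ennreal (\<Sum>p\<in>A. c p * indicator (X p) x) = (\<Sum>p\<in>A. ennreal (c p) * indicator (X p) x)" .
  qed
  also have "\<dots> = (\<Sum>p\<in>A. \<integral>\<^sup>+x. ennreal (c p) * indicator (X p) x \<partial>lborel)"
    by (rule nn_integral_sum) (use assms(3) in auto)
  also have "\<dots> = (\<Sum>p\<in>A. ennreal (c p) * emeasure lborel (X p))"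
    by (rule sum.cong) (auto intro!: nn_integral_cmult_indicator assms(3))
  finally show ?thesis .
qed

lemma line_meets:
  assumes s: "0 \<le> sin \<theta>" and c: "0 \<le> cos \<theta>" and L: "L > 0"
    and h: "line \<theta> t \<inter> grid_sq L n i j \<noteq> {}"
  shows "t \<in> {(-(real i+1) * sin \<theta> + real j * cos \<theta>) / real L ^ n ..
               (-(real i+1) * sin \<theta> + real j * cos \<theta>) / real L ^ n + (sin \<theta> + cos \<theta>) / real L ^ n}"
proof -
  define P where "P = real L ^ n"
  have P: "P > 0" using L by (simp add: P_def)
  obtain x y where xy: "(x,y) \<in> line \<theta> t" "(x,y) \<in> grid_sq L n i j" using h by auto
  have t: "t = - x * sin \<theta> + y * cos \<theta>" using xy(1) unfolding line_def proj_def by (simp add: inner_prod_def)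
  have b: "real i / P \<le> x" "x \<le> real (i+1) / P" "real j / P \<le> y" "y \<le> real (j+1) / P"
    using xy(2) unfolding grid_sq_mem P_def by auto
  have 1: "- (real (i+1) / P) * sin \<theta> \<le> - x * sin \<theta>" using b(2) s by (intro mult_right_mono) simp_all
  have 2: "real j / P * cos \<theta> \<le> y * cos \<theta>" using b(3) c by (intro mult_right_mono) simp_all
  have 3: "- x * sin \<theta> \<le> - (real i / P) * sin \<theta>" using b(1) s by (intro mult_right_mono) simp_all
  have 4: "y * cos \<theta> \<le> real (j+1) / P * cos \<theta>" using b(4) c by (intro mult_right_mono) simp_all
  have lo: "(-(real i+1) * sin \<theta> + real j * cos \<theta>) / P = - (real (i+1) / P) * sin \<theta> + real j / P * cos \<theta>"
    using P by (simp add: field_simps)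
  have hi: "(-(real i+1) * sin \<theta> + real j * cos \<theta>) / P + (sin \<theta> + cos \<theta>) / P = - (real i / P) * sin \<theta> + real (j+1) / P * cos \<theta>"
    using P by (simp add: field_simps)
  have L1: "(-(real i+1) * sin \<theta> + real j * cos \<theta>) / P \<le> t" using 1 2 t lo by linarith
  have L2: "t \<le> (-(real i+1) * sin \<theta> + real j * cos \<theta>) / P + (sin \<theta> + cos \<theta>) / P" using 3 4 t hi by linarith
  show ?thesis unfolding atLeastAtMost_iff P_def[symmetric] using L1 L2 by blast
qed

lemma overlap:
  fixes P a1 a2 :: real
  assumes P: "P > 0" and s: "0 \<le> sin \<theta>" "sin \<theta> \<le> 1" and c: "0 \<le> cos \<theta>" "cos \<theta> \<le> 1"
    and t1: "t \<in> {(-(real i+1) * sin \<theta> + real j * cos \<theta>) / P .. (-(real i+1) * sin \<theta> + real j * cos \<theta>) / P + (sin \<theta> + cos \<theta>) / P}"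
    and t2: "t \<in> {(-(real i'+1) * sin \<theta> + real j' * cos \<theta>) / P .. (-(real i'+1) * sin \<theta> + real j' * cos \<theta>) / P + (sin \<theta> + cos \<theta>) / P}"
  shows "\<bar>(real i - real i') * sin \<theta> - (real j - real j') * cos \<theta>\<bar> \<le> 2"
proof -
  define A1 where "A1 = -(real i+1) * sin \<theta> + real j * cos \<theta>"
  define A2 where "A2 = -(real i'+1) * sin \<theta> + real j' * cos \<theta>"
  have "A1 / P \<le> A2 / P + (sin \<theta> + cos \<theta>) / P" using t1 t2 unfolding A1_def A2_def by auto
  hence "A1 \<le> A2 + (sin \<theta> + cos \<theta>)" using P by (simp add: field_simps)
  moreover have "A2 / P \<le> A1 / P + (sin \<theta> + cos \<theta>) / P" using t1 t2 unfolding A1_def A2_def by auto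
  hence "A2 \<le> A1 + (sin \<theta> + cos \<theta>)" using P by (simp add: field_simps)
  moreover have "(real i - real i') * sin \<theta> - (real j - real j') * cos \<theta> = A2 - A1"
    unfolding A1_def A2_def by (simp add: algebra_simps)
  ultimately show ?thesis unfolding abs_le_iff using s c by linarith
qed

lemma fcount_le_card:
  assumes L: "L > 0" and H: "S n = (\<Union>i<L ^ n. grid_sq L n i (cc n i))"
  shows "fcount L S n \<theta> t \<le> real (card {i. i < L ^ n \<and> line \<theta> t \<inter> grid_sq L n i (cc n i) \<noteq> {}})"
proof -
  have "{Q \<in> squares L S n. line \<theta> t \<inter> Q \<noteq> {}} \<subseteq>
        (\<lambda>i. grid_sq L n i (cc n i)) ` {i. i < L ^ n \<and> line \<theta> t \<inter> grid_sq L n i (cc n i) \<noteq> {}}"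
  proof
    fix Q assume Q: "Q \<in> {Q \<in> squares L S n. line \<theta> t \<inter> Q \<noteq> {}}"
    hence "Q \<in> squares L S n" by simp
    then obtain i where i: "i < L ^ n" "Q = grid_sq L n i (cc n i)" using squares_cols[of L S n cc Q] L H by blast
    thus "Q \<in> (\<lambda>i. grid_sq L n i (cc n i)) ` {i. i < L ^ n \<and> line \<theta> t \<inter> grid_sq L n i (cc n i) \<noteq> {}}"
      using Q by blast
  qed
  hence "card {Q \<in> squares L S n. line \<theta> t \<inter> Q \<noteq> {}} \<le>
        card ((\<lambda>i. grid_sq L n i (cc n i)) ` {i. i < L ^ n \<and> line \<theta> t \<inter> grid_sq L n i (cc n i) \<noteq> {}})"
    by (intro card_mono) simp_all
  also have "\<dots> \<le> card {i. i < L ^ n \<and> line \<theta> t \<inter> grid_sq L n i (cc n i) \<noteq> {}}"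
    by (rule card_image_le) simp
  finally show ?thesis unfolding fcount_def by (simp only: of_nat_le_iff)
qed

lemma card_le_sum_indicator:
  fixes N :: nat and J :: "nat \<Rightarrow> real set"
  assumes "\<And>i. i < N \<Longrightarrow> P i \<Longrightarrow> t \<in> J i"
  shows "real (card {i. i < N \<and> P i}) \<le> (\<Sum>i<N. indicator (J i) t)"
proof -
  have f: "finite {i \<in> {..<N}. t \<in> J i}" by simp
  have "card {i. i < N \<and> P i} \<le> card {i \<in> {..<N}. t \<in> J i}"
    by (rule card_mono[OF f]) (use assms in auto)
  hence "real (card {i. i < N \<and> P i}) \<le> real (card {i \<in> {..<N}. t \<in> J i})" by (simp only: of_nat_le_iff)
  also have "{i \<in> {..<N}. t \<in> J i} = {..<N} \<inter> {i. t \<in> J i}" by auto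
  also have "card ({..<N} \<inter> {i. t \<in> J i}) = (\<Sum>i<N. indicator {i. t \<in> J i} i :: nat)"
    by (rule sum_indicator_eq_card[symmetric]) simp
  also have "real (\<Sum>i<N. indicator {i. t \<in> J i} i :: nat) = (\<Sum>i<N. real (indicator {i. t \<in> J i} i :: nat))"
    by (rule of_nat_sum)
  also have "\<dots> = (\<Sum>i<N. indicator (J i) t)" by (simp add: indicator_def)
  finally show ?thesis .
qed

lemma inner_bound:
  assumes L: "L \<ge> 2" and k: "k \<ge> 1" and H: "S n = (\<Union>i<L ^ n. grid_sq L n i (cc n i))"
    and th: "\<theta> \<in> Theta L k"
    and U: "\<And>p. p \<in> {..<L^n} \<times> {..<L^n} \<Longrightarrow>
       {\<theta> \<in> Theta L k. \<bar>(real (fst p) - real (snd p)) * sin \<theta> - (real (cc n (fst p)) - real (cc n (snd p))) * cos \<theta>\<bar> \<le> 2} \<subseteq> U p"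
  shows "(\<integral>\<^sup>+t. ennreal ((fcount L S n \<theta> t)\<^sup>2) \<partial>lborel)
     \<le> ennreal (\<Sum>p\<in>{..<L^n} \<times> {..<L^n}. (2 / real L ^ n) * indicator (U p) \<theta>)"
proof -
  define N where "N = L ^ n"
  define P where "P = real L ^ n"
  define I where "I = {..<N} \<times> {..<N}"
  have L0: "L > 0" using L by simp
  have P: "P > 0" using L by (simp add: P_def)
  note f = Theta_facts[OF L k th]
  have s1: "sin \<theta> \<le> 1" and c1: "cos \<theta> \<le> 1" by simp_all
  define J where "J i = {(-(real i+1) * sin \<theta> + real (cc n i) * cos \<theta>) / P ..
               (-(real i+1) * sin \<theta> + real (cc n i) * cos \<theta>) / P + (sin \<theta> + cos \<theta>) / P}" for i
  have f1: "fcount L S n \<theta> t \<le> (\<Sum>i<N. indicator (J i) t)" for t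
  proof -
    have "fcount L S n \<theta> t \<le> real (card {i. i < L ^ n \<and> line \<theta> t \<inter> grid_sq L n i (cc n i) \<noteq> {}})"
      by (rule fcount_le_card[of L S n cc, OF L0 H])
    also have "\<dots> \<le> (\<Sum>i<N. indicator (J i) t)"
      unfolding N_def
    proof (rule card_le_sum_indicator)
      fix i assume "i < L ^ n" "line \<theta> t \<inter> grid_sq L n i (cc n i) \<noteq> {}"
      thus "t \<in> J i" unfolding J_def P_def using line_meets[of \<theta> L t n i "cc n i"] f L0 by simp
    qed
    finally show ?thesis .
  qed
  have f2: "(fcount L S n \<theta> t)\<^sup>2 \<le> (\<Sum>p\<in>I. indicator (U p) \<theta> * indicator (J (fst p)) t)" for t
  proof -
    have "0 \<le> fcount L S n \<theta> t" unfolding fcount_def by simp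
    hence "(fcount L S n \<theta> t)\<^sup>2 \<le> (\<Sum>i<N. indicator (J i) t)\<^sup>2" using f1 by (intro power_mono) simp_all
    also have "\<dots> = (\<Sum>i<N. indicator (J i) t) * (\<Sum>j<N. indicator (J j) t)" by (simp add: power2_eq_square)
    also have "\<dots> = (\<Sum>i<N. \<Sum>j<N. indicator (J i) t * indicator (J j) t)" by (rule sum_product)
    also have "\<dots> = (\<Sum>p\<in>I. indicator (J (fst p)) t * indicator (J (snd p)) t)"
      unfolding I_def by (subst sum.cartesian_product) (simp add: split_def)
    also have "\<dots> \<le> (\<Sum>p\<in>I. indicator (U p) \<theta> * indicator (J (fst p)) t)"
    proof (rule sum_mono)
      fix p assume p: "p \<in> I"
      show "indicator (J (fst p)) t * indicator (J (snd p)) t \<le> (indicator (U p) \<theta> * indicator (J (fst p)) t :: real)"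
      proof (cases "t \<in> J (fst p) \<and> t \<in> J (snd p)")
        case True
        have tJ: "t \<in> J (fst p)" "t \<in> J (snd p)" using True by auto
        have "\<bar>(real (fst p) - real (snd p)) * sin \<theta> - (real (cc n (fst p)) - real (cc n (snd p))) * cos \<theta>\<bar> \<le> 2"
          using overlap[OF P _ s1 _ c1 tJ(1)[unfolded J_def] tJ(2)[unfolded J_def]] f by simp
        hence "\<theta> \<in> U p" using U[of p] p th unfolding I_def N_def by blast
        thus ?thesis using True by simp
      next
        case False
        thus ?thesis by (auto simp: indicator_def)
      qed
    qed
    finally show ?thesis .
  qed
  have mJ: "emeasure lborel (J i) = ennreal ((sin \<theta> + cos \<theta>) / P)" for i
    unfolding J_def using f P by simp
  have "(\<integral>\<^sup>+t. ennreal ((fcount L S n \<theta> t)\<^sup>2) \<partial>lborel)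
      \<le> (\<integral>\<^sup>+t. ennreal (\<Sum>p\<in>I. indicator (U p) \<theta> * indicator (J (fst p)) t) \<partial>lborel)"
    by (intro nn_integral_mono ennreal_leI f2)
  also have "\<dots> = (\<Sum>p\<in>I. ennreal (indicator (U p) \<theta>) * emeasure lborel (J (fst p)))"
    by (rule nn_integral_sum_indicator) (auto simp: I_def J_def)
  also have "\<dots> = (\<Sum>p\<in>I. ennreal (indicator (U p) \<theta> * ((sin \<theta> + cos \<theta>) / P)))"
    by (rule sum.cong) (auto simp: mJ ennreal_mult' indicator_def)
  also have "\<dots> \<le> (\<Sum>p\<in>I. ennreal ((2 / P) * indicator (U p) \<theta>))"
  proof (intro sum_mono ennreal_leI)
    fix p
    have "sin \<theta> + cos \<theta> \<le> 2" using s1 c1 by linarith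
    hence "(sin \<theta> + cos \<theta>) / P \<le> 2 / P" using P by (intro divide_right_mono) simp_all
    thus "indicator (U p) \<theta> * ((sin \<theta> + cos \<theta>) / P) \<le> (2 / P) * indicator (U p) \<theta>"
      by (auto simp: indicator_def)
  qed
  also have "\<dots> = ennreal (\<Sum>p\<in>I. (2 / P) * indicator (U p) \<theta>)"
    by (rule sum_ennreal) (use P in simp)
  finally show ?thesis unfolding I_def N_def P_def .
qed

lemma w1_row:
  fixes N i :: nat and a :: real
  assumes a: "a \<ge> 0"
  shows "(\<Sum>i'<N. if \<bar>real i - real i'\<bar> < 5 then a else 0) \<le> 9 * a"
proof -
  have "(\<Sum>i'<N. if \<bar>real i - real i'\<bar> < 5 then a else 0) = (\<Sum>i'\<in>{..<N} \<inter> {i-4..i+4}. if \<bar>real i - real i'\<bar> < 5 then a else 0)"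
  proof (rule sum.mono_neutral_right)
    show "\<forall>x\<in>{..<N} - {..<N} \<inter> {i - 4..i + 4}. (if \<bar>real i - real x\<bar> < 5 then a else 0) = 0"
    proof
      fix x assume "x \<in> {..<N} - {..<N} \<inter> {i - 4..i + 4}"
      hence "x < i - 4 \<or> x > i + 4" by auto
      hence "\<not> \<bar>real i - real x\<bar> < 5" by (auto simp: abs_less_iff)
      thus "(if \<bar>real i - real x\<bar> < 5 then a else 0) = 0" by simp
    qed
  qed auto
  also have "\<dots> \<le> (\<Sum>i'\<in>{..<N} \<inter> {i-4..i+4}. a)" by (rule sum_mono) (use a in auto)
  also have "\<dots> \<le> (\<Sum>i'\<in>{i-4..i+4}. a)" by (rule sum_mono2) (use a in auto)
  also have "\<dots> = real (card {i-4..i+4}) * a" by simp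
  also have "\<dots> \<le> 9 * a"
  proof (rule mult_right_mono[OF _ a])
    have "card {i-4..i+4} \<le> 9" by simp
    thus "real (card {i-4..i+4}) \<le> 9" by linarith
  qed
  finally show ?thesis .
qed

definition hterm :: "nat \<Rightarrow> nat \<Rightarrow> nat \<Rightarrow> nat \<Rightarrow> nat \<Rightarrow> real" where
  "hterm L k r i j = (if i div L ^ (r - 1) \<noteq> j div L ^ (r - 1) \<and> 0 < \<bar>int j - int i\<bar> \<and>
      real_of_int \<bar>int j - int i\<bar> < 2 * real L ^ r / real L ^ k then 1 / real_of_int \<bar>int j - int i\<bar> else 0)"

lemma hterm_nonneg: "hterm L k r i j \<ge> 0"
  by (simp add: hterm_def)

lemma wpair_split:
  assumes L: "L \<ge> 2" and k: "k \<ge> 1" and mono: "\<And>n. S (Suc n) \<subseteq> S n"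
    and H: "\<And>n. S n = (\<Union>i<L ^ n. grid_sq L n i (cc n i))"
    and i: "i < L ^ n" and j: "j < L ^ n"
  shows "wpair L k (real i - real j) (real (cc n i) - real (cc n j))
     \<le> (if \<bar>real i - real j\<bar> < 5 then 5 / (2 * real L ^ k) else 0) + (20 / real L ^ k) * (\<Sum>r\<in>{1..n}. hterm L k r i j)"
proof -
  define m where "m = real i - real j"
  define d where "d = real (cc n i) - real (cc n j)"
  have L0: "L > 0" using L by simp
  have Lk: "real L ^ k > 0" using L by simp
  have hs: "(\<Sum>r\<in>{1..n}. hterm L k r i j) \<ge> 0" by (intro sum_nonneg hterm_nonneg)
  consider (a) "\<bar>m\<bar> < 5" | (b) "\<not> \<bar>m\<bar> < 5" "\<bar>m\<bar> * real L ^ k \<le> 2 * \<bar>d\<bar>"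
    | (c) "\<not> \<bar>m\<bar> < 5" "\<not> \<bar>m\<bar> * real L ^ k \<le> 2 * \<bar>d\<bar>" by blast
  thus ?thesis
  proof cases
    case a
    thus ?thesis using hs Lk unfolding m_def[symmetric] d_def[symmetric] by (simp add: wpair_def)
  next
    case c
    thus ?thesis using hs Lk unfolding m_def[symmetric] d_def[symmetric] by (simp add: wpair_def)
  next
    case b
    have m5: "\<bar>m\<bar> \<ge> 5" using b by simp
    hence ij: "i \<noteq> j" unfolding m_def by auto
    define Pr where "Pr r = (i div L ^ r = j div L ^ r)" for r
    have Pn: "Pr n" unfolding Pr_def using i j by simp
    define r0 where "r0 = (LEAST r. Pr r)"
    have Pr0: "Pr r0" unfolding r0_def by (rule LeastI[of Pr n, OF Pn])
    have r0n: "r0 \<le> n" unfolding r0_def by (rule Least_le[of Pr n, OF Pn])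
    have "r0 \<noteq> 0"
    proof
      assume "r0 = 0"
      hence "i = j" using Pr0 unfolding Pr_def by simp
      thus False using ij by simp
    qed
    then obtain r' where r': "r0 = Suc r'" by (cases r0) auto
    have nPr': "\<not> Pr r'" unfolding r0_def
    proof (rule not_less_Least)
      show "r' < (LEAST r. Pr r)" using r' unfolding r0_def by simp
    qed
    have cl: "\<bar>int (cc n i) - int (cc n j)\<bar> < int (L ^ r0)"
      by (rule cc_close[OF L0 mono H r0n i j]) (use Pr0 in \<open>simp add: Pr_def\<close>)
    hence "\<bar>d\<bar> < real L ^ r0" unfolding d_def
    proof -
      assume "\<bar>int (cc n i) - int (cc n j)\<bar> < int (L ^ r0)"
      hence "real_of_int \<bar>int (cc n i) - int (cc n j)\<bar> < real_of_int (int (L ^ r0))" by (simp only: of_int_less_iff)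
      thus "\<bar>real (cc n i) - real (cc n j)\<bar> < real L ^ r0" by simp
    qed
    hence mlt: "\<bar>m\<bar> * real L ^ k < 2 * real L ^ r0" using b by linarith
    have eqm: "real_of_int \<bar>int j - int i\<bar> = \<bar>m\<bar>" unfolding m_def by simp
    have "hterm L k r0 i j = 1 / \<bar>m\<bar>"
    proof -
      have "i div L ^ (r0 - 1) \<noteq> j div L ^ (r0 - 1)" using nPr' r' unfolding Pr_def by simp
      moreover have "0 < \<bar>int j - int i\<bar>" using ij by simp
      moreover have "real_of_int \<bar>int j - int i\<bar> < 2 * real L ^ r0 / real L ^ k"
        unfolding eqm using mlt Lk by (simp add: field_simps)
      ultimately show ?thesis unfolding hterm_def eqm by simp
    qed
    moreover have "r0 \<in> {1..n}" using r' r0n by simp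
    ultimately have "1 / \<bar>m\<bar> \<le> (\<Sum>r\<in>{1..n}. hterm L k r i j)"
      by (metis finite_atLeastAtMost member_le_sum hterm_nonneg)
    hence "(20 / real L ^ k) * (1 / \<bar>m\<bar>) \<le> (20 / real L ^ k) * (\<Sum>r\<in>{1..n}. hterm L k r i j)"
      using Lk by (intro mult_left_mono) simp_all
    moreover have "wpair L k m d = (20 / real L ^ k) * (1 / \<bar>m\<bar>)" using b by (simp add: wpair_def)
    ultimately show ?thesis using b unfolding m_def[symmetric] d_def[symmetric] by simp
  qed
qed

lemma hsum_r:
  assumes L: "L \<ge> 2" and r: "r \<in> {1..n}"
  shows "(\<Sum>i<L^n. \<Sum>j<L^n. hterm L k r i j) \<le> 4 * real L * real L ^ n / real L ^ k"
proof -
  have L0: "L > 0" using L by simp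
  have B: "L ^ (r - 1) > 0" using L0 by simp
  have rn: "r - 1 \<le> n" using r by (simp only: atLeastAtMost_iff) arith
  have dv: "L ^ (r - 1) dvd L ^ n" using rn by (rule le_imp_power_dvd)
  have D: "2 * real L ^ r / real L ^ k \<ge> 0" by simp
  have "(\<Sum>i<L^n. \<Sum>j<L^n. hterm L k r i j) \<le> 2 * (2 * real L ^ r / real L ^ k) * real (L ^ n div L ^ (r - 1))"
    unfolding hterm_def by (rule pair_sum_bound[OF B dv D])
  also have "real (L ^ n div L ^ (r - 1)) = real L ^ n / real L ^ (r - 1)"
    using dv by (simp add: real_of_nat_div)
  also have "real L ^ r = real L * real L ^ (r - 1)"
  proof -
    obtain r' where r': "r = Suc r'" using r by (cases r) auto
    show ?thesis unfolding r' by simp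
  qed
  also have "2 * (2 * (real L * real L ^ (r - 1)) / real L ^ k) * (real L ^ n / real L ^ (r - 1))
      = 4 * real L * real L ^ n / real L ^ k" using L0 by (simp add: field_simps)
  finally show ?thesis .
qed

lemma sum_w_bound:
  assumes L: "L \<ge> 2" and k: "k \<ge> 1" and mono: "\<And>n. S (Suc n) \<subseteq> S n"
    and H: "\<And>n. S n = (\<Union>i<L ^ n. grid_sq L n i (cc n i))"
    and nk: "real L ^ k \<le> real n"
  shows "(2 / real L ^ n) * (\<Sum>p\<in>{..<L^n} \<times> {..<L^n}. wpair L k (real (fst p) - real (snd p)) (real (cc n (fst p)) - real (cc n (snd p))))
     \<le> 200 * real L * real n / real L ^ (2 * k)"
proof -
  define N where "N = L ^ n"
  define P where "P = real L ^ n"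
  define Lk where "Lk = real L ^ k"
  have L0: "L > 0" using L by simp
  have P: "P > 0" using L0 by (simp add: P_def)
  have Lk: "Lk > 0" using L0 by (simp add: Lk_def)
  have PN: "real N = P" by (simp add: N_def P_def)
  define w1 where "w1 i j = (if \<bar>real i - real j\<bar> < 5 then 5 / (2 * Lk) else 0)" for i j :: nat
  have "(\<Sum>p\<in>{..<N} \<times> {..<N}. wpair L k (real (fst p) - real (snd p)) (real (cc n (fst p)) - real (cc n (snd p))))
     = (\<Sum>i<N. \<Sum>j<N. wpair L k (real i - real j) (real (cc n i) - real (cc n j)))"
    by (subst sum.cartesian_product) (simp add: split_def)
  also have "\<dots> \<le> (\<Sum>i<N. \<Sum>j<N. w1 i j + (20 / Lk) * (\<Sum>r\<in>{1..n}. hterm L k r i j))"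
    unfolding w1_def Lk_def N_def
    by (intro sum_mono wpair_split[OF L k mono H]) simp_all
  also have "\<dots> = (\<Sum>i<N. \<Sum>j<N. w1 i j) + (20 / Lk) * (\<Sum>r\<in>{1..n}. \<Sum>i<N. \<Sum>j<N. hterm L k r i j)"
  proof -
    have "(\<Sum>i<N. \<Sum>j<N. w1 i j + (20 / Lk) * (\<Sum>r\<in>{1..n}. hterm L k r i j))
        = (\<Sum>i<N. \<Sum>j<N. w1 i j) + (20 / Lk) * (\<Sum>i<N. \<Sum>j<N. \<Sum>r\<in>{1..n}. hterm L k r i j)"
      by (simp add: sum.distrib sum_distrib_left)
    also have "(\<Sum>i<N. \<Sum>j<N. \<Sum>r\<in>{1..n}. hterm L k r i j) = (\<Sum>i<N. \<Sum>r\<in>{1..n}. \<Sum>j<N. hterm L k r i j)"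
      by (rule sum.cong[OF refl], rule sum.swap)
    also have "\<dots> = (\<Sum>r\<in>{1..n}. \<Sum>i<N. \<Sum>j<N. hterm L k r i j)" by (rule sum.swap)
    finally show ?thesis .
  qed
  also have "\<dots> \<le> real N * (9 * (5 / (2 * Lk))) + (20 / Lk) * (real n * (4 * real L * P / Lk))"
  proof (rule add_mono)
    have "(\<Sum>i<N. \<Sum>j<N. w1 i j) \<le> (\<Sum>i<N. 9 * (5 / (2 * Lk)))"
      unfolding w1_def by (intro sum_mono w1_row) (use Lk in simp)
    also have "\<dots> = real N * (9 * (5 / (2 * Lk)))" by simp
    finally show "(\<Sum>i<N. \<Sum>j<N. w1 i j) \<le> real N * (9 * (5 / (2 * Lk)))" .
    have "(\<Sum>r\<in>{1..n}. \<Sum>i<N. \<Sum>j<N. hterm L k r i j) \<le> (\<Sum>r\<in>{1..n}. 4 * real L * P / Lk)"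
      unfolding N_def P_def Lk_def by (intro sum_mono hsum_r[OF L])
    also have "\<dots> = real n * (4 * real L * P / Lk)" by simp
    finally show "(20 / Lk) * (\<Sum>r\<in>{1..n}. \<Sum>i<N. \<Sum>j<N. hterm L k r i j) \<le> (20 / Lk) * (real n * (4 * real L * P / Lk))"
      using Lk by (intro mult_left_mono) simp_all
  qed
  finally have S: "(\<Sum>p\<in>{..<N} \<times> {..<N}. wpair L k (real (fst p) - real (snd p)) (real (cc n (fst p)) - real (cc n (snd p))))
     \<le> P * (9 * (5 / (2 * Lk))) + (20 / Lk) * (real n * (4 * real L * P / Lk))" unfolding PN .
  have "(2 / P) * (\<Sum>p\<in>{..<N} \<times> {..<N}. wpair L k (real (fst p) - real (snd p)) (real (cc n (fst p)) - real (cc n (snd p))))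
     \<le> (2 / P) * (P * (9 * (5 / (2 * Lk))) + (20 / Lk) * (real n * (4 * real L * P / Lk)))"
    using S P by (intro mult_left_mono) simp_all
  also have "\<dots> = 45 * Lk / Lk^2 + 160 * real L * real n / Lk^2"
    using P Lk by (simp add: field_simps power2_eq_square)
  also have "\<dots> \<le> 45 * real n / Lk^2 + 160 * real L * real n / Lk^2"
  proof -
    have "45 * Lk \<le> 45 * real n" using nk unfolding Lk_def by simp
    thus ?thesis using Lk by (simp add: divide_right_mono)
  qed
  also have "\<dots> \<le> 200 * real L * real n / Lk^2"
  proof -
    have "45 * real n + 160 * real L * real n \<le> 200 * real L * real n"
    proof -
      have "45 \<le> 40 * real L" using L by simp
      hence "45 * real n \<le> 40 * real L * real n" by (intro mult_right_mono) simp_all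
      thus ?thesis by simp
    qed
    hence "(45 * real n + 160 * real L * real n) / Lk^2 \<le> 200 * real L * real n / Lk^2"
      using Lk by (intro divide_right_mono) simp_all
    thus ?thesis by (simp add: add_divide_distrib)
  qed
  also have "Lk^2 = real L ^ (2 * k)" unfolding Lk_def by (simp add: power_mult[symmetric] mult.commute)
  finally show ?thesis unfolding N_def P_def .
qed

theorem lemmaA3:
  fixes L :: nat
  assumes "L \<ge> 2"
  shows "\<exists>C::real. \<forall>S n k. admissible L S \<longrightarrow> 1 \<le> k \<longrightarrow>
           int k \<le> \<lfloor>log (real L) (real n)\<rfloor> \<longrightarrow>
           (\<integral>\<^sup>+ \<theta>. indicator (Theta L k) \<theta> *
              (\<integral>\<^sup>+ t. ennreal ((fcount L S n \<theta> t)\<^sup>2) \<partial>lborel) \<partial>lborel)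
           \<le> ennreal (C * real n / real L ^ (2 * k))"
proof (intro exI[of _ "200 * real L"] allI impI)
  note L = assms
  have L0: "L > 0" using L by simp
  fix S n k assume adm: "admissible L S" and k: "1 \<le> k" and kl: "int k \<le> \<lfloor>log (real L) (real n)\<rfloor>"
  obtain cc where cc: "\<forall>n. (\<forall>i<L ^ n. cc n i < L ^ n) \<and> S n = (\<Union>i<L ^ n. grid_sq L n i (cc n i))"
    using adm_cc[OF adm] by blast
  have H: "\<And>n. S n = (\<Union>i<L ^ n. grid_sq L n i (cc n i))" using cc by blast
  have mono: "\<And>n. S (Suc n) \<subseteq> S n" using adm unfolding admissible_def by blast
  have nk: "real L ^ k \<le> real n"
  proof -
    have kle: "real k \<le> log (real L) (real n)"
    proof -
      have "real_of_int (int k) \<le> real_of_int \<lfloor>log (real L) (real n)\<rfloor>" using kl by (simp only: of_int_le_iff)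
      also have "\<dots> \<le> log (real L) (real n)" by (rule of_int_floor_le)
      finally show ?thesis by simp
    qed
    have n0: "n > 0"
    proof (rule ccontr)
      assume "\<not> n > 0"
      hence "n = 0" by simp
      hence "log (real L) (real n) = 0" by (simp add: log_def)
      thus False using kle k by simp
    qed
    have L1: "1 < real L" using L by simp
    have "real L powr real k \<le> real n" using kle le_log_iff[OF L1, of "real n" "real k"] n0 by simp
    thus ?thesis using L0 by (simp add: powr_realpow)
  qed
  define P where "P = real L ^ n"
  have P: "P > 0" using L0 by (simp add: P_def)
  define I where "I = {..<L^n} \<times> {..<L^n}"
  define A where "A p = {\<theta> \<in> Theta L k. \<bar>(real (fst p) - real (snd p)) * sin \<theta> - (real (cc n (fst p)) - real (cc n (snd p))) * cos \<theta>\<bar> \<le> 2}" for p :: "nat \<times> nat"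
  define w where "w p = wpair L k (real (fst p) - real (snd p)) (real (cc n (fst p)) - real (cc n (snd p)))" for p :: "nat \<times> nat"
  have "\<forall>p. \<exists>lh. fst lh \<le> snd lh \<and> snd lh - fst lh \<le> w p \<and> A p \<subseteq> {fst lh..snd lh}"
  proof
    fix p
    obtain lo hi where "lo \<le> hi" "hi - lo \<le> w p" "A p \<subseteq> {lo..hi}"
      using pair_cover[OF L k] unfolding A_def w_def by blast
    thus "\<exists>lh. fst lh \<le> snd lh \<and> snd lh - fst lh \<le> w p \<and> A p \<subseteq> {fst lh..snd lh}"
      by (intro exI[of _ "(lo, hi)"]) simp
  qed
  then obtain LH where LH: "\<And>p. fst (LH p) \<le> snd (LH p)" "\<And>p. snd (LH p) - fst (LH p) \<le> w p"
      "\<And>p. A p \<subseteq> {fst (LH p)..snd (LH p)}"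
    by metis
  define U where "U p = {fst (LH p)..snd (LH p)}" for p
  have w0: "w p \<ge> 0" for p using LH(1,2)[of p] by simp
  have step4: "indicator (Theta L k) \<theta> * (\<integral>\<^sup>+ t. ennreal ((fcount L S n \<theta> t)\<^sup>2) \<partial>lborel)
      \<le> ennreal (\<Sum>p\<in>I. (2 / P) * indicator (U p) \<theta>)" for \<theta>
  proof (cases "\<theta> \<in> Theta L k")
    case True
    have "(\<integral>\<^sup>+ t. ennreal ((fcount L S n \<theta> t)\<^sup>2) \<partial>lborel) \<le> ennreal (\<Sum>p\<in>{..<L^n} \<times> {..<L^n}. (2 / real L ^ n) * indicator (U p) \<theta>)"
    proof (rule inner_bound[OF L k H True])
      fix p assume "p \<in> {..<L^n} \<times> {..<L^n}"
      show "{\<theta> \<in> Theta L k. \<bar>(real (fst p) - real (snd p)) * sin \<theta> - (real (cc n (fst p)) - real (cc n (snd p))) * cos \<theta>\<bar> \<le> 2} \<subseteq> U p"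
        using LH(3)[of p] unfolding A_def U_def .
    qed
    thus ?thesis using True unfolding I_def P_def by simp
  next
    case False
    thus ?thesis by simp
  qed
  have "(\<integral>\<^sup>+ \<theta>. indicator (Theta L k) \<theta> * (\<integral>\<^sup>+ t. ennreal ((fcount L S n \<theta> t)\<^sup>2) \<partial>lborel) \<partial>lborel)
      \<le> (\<integral>\<^sup>+ \<theta>. ennreal (\<Sum>p\<in>I. (2 / P) * indicator (U p) \<theta>) \<partial>lborel)"
    by (intro nn_integral_mono step4)
  also have "\<dots> = (\<Sum>p\<in>I. ennreal (2 / P) * emeasure lborel (U p))"
    by (rule nn_integral_sum_indicator) (use P in \<open>auto simp: I_def U_def\<close>)
  also have "\<dots> = (\<Sum>p\<in>I. ennreal ((2 / P) * (snd (LH p) - fst (LH p))))"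
  proof (rule sum.cong[OF refl])
    fix p assume "p \<in> I"
    have d: "snd (LH p) - fst (LH p) \<ge> 0" using LH(1)[of p] by simp
    have e: "emeasure lborel (U p) = ennreal (snd (LH p) - fst (LH p))" unfolding U_def using LH(1)[of p] by simp
    have m: "ennreal ((2 / P) * (snd (LH p) - fst (LH p))) = ennreal (2 / P) * ennreal (snd (LH p) - fst (LH p))"
      by (rule ennreal_mult) (use P d in simp_all)
    show "ennreal (2 / P) * emeasure lborel (U p) = ennreal ((2 / P) * (snd (LH p) - fst (LH p)))"
      by (simp only: e m)
  qed
  also have "\<dots> \<le> (\<Sum>p\<in>I. ennreal ((2 / P) * w p))"
    by (intro sum_mono ennreal_leI mult_left_mono LH(2)) (use P in simp)
  also have "\<dots> = ennreal (\<Sum>p\<in>I. (2 / P) * w p)"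
    by (rule sum_ennreal) (use P w0 in simp)
  also have "(\<Sum>p\<in>I. (2 / P) * w p) = (2 / P) * (\<Sum>p\<in>I. w p)" by (rule sum_distrib_left[symmetric])
  also have "\<dots> \<le> 200 * real L * real n / real L ^ (2 * k)"
    unfolding P_def I_def w_def by (rule sum_w_bound[OF L k mono H nk])
  finally show "(\<integral>\<^sup>+ \<theta>. indicator (Theta L k) \<theta> * (\<integral>\<^sup>+ t. ennreal ((fcount L S n \<theta> t)\<^sup>2) \<partial>lborel) \<partial>lborel)
      \<le> ennreal (200 * real L * real n / real L ^ (2 * k))" by (simp add: ennreal_leI)
qed

end
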